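(* Let $G$ be a finite group. Then $G$ is nested if and only if $K(G/N)>1$ for every proper normal subgroup $N$ of $G$.
   Context: All groups are finite. For $\chi\in\mathrm{Irr}(G)$, the center of $\chi$ is $Z(\chi)=\{g\in G : |\chi(g)|=\chi(1)\}$; equivalently $Z(\chi)/\ker(\chi)=Z(G/\ker(\chi))$. A group $G$ is nested if for all $\chi,\psi\in\mathrm{Irr}(G)$ either $Z(\chi)\le Z(\psi)$ or $Z(\psi)\le Z(\chi)$. For a nonabelian group $H$, let $\mathcal{X}_H=\{\chi\in\mathrm{Irr}(H) : Z(\chi)>Z(H)\}$ (strict containment) and define $K(H)=\bigcap_{\chi\in\mathcal{X}_H}\ker(\chi)$; if $H$ is abelian, set $K(H)=H$. Here $K(G/N)$ is this subgroup computed in the group $H=G/N$. *)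

theory Defs
  imports "HOL-Algebra.Algebra" "Jordan_Normal_Form.Matrix"
begin

definition mat_tr :: "complex mat \<Rightarrow> complex" where
  "mat_tr A = (\<Sum>i<dim_row A. A $$ (i, i))"

definition csubspace_vec :: "nat \<Rightarrow> complex vec set \<Rightarrow> bool" where
  "csubspace_vec n W \<longleftrightarrow> W \<subseteq> carrier_vec n \<and> 0\<^sub>v n \<in> W \<and>
     (\<forall>v\<in>W. \<forall>w\<in>W. v + w \<in> W) \<and> (\<forall>c. \<forall>v\<in>W. c \<cdot>\<^sub>v v \<in> W)"

definition crep :: "('a, 'b) monoid_scheme \<Rightarrow> nat \<Rightarrow> ('a \<Rightarrow> complex mat) \<Rightarrow> bool" where
  "crep G n \<rho> \<longleftrightarrow> 0 < n \<and> (\<forall>g\<in>carrier G. \<rho> g \<in> carrier_mat n n) \<and>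
     \<rho> \<one>\<^bsub>G\<^esub> = 1\<^sub>m n \<and>
     (\<forall>g\<in>carrier G. \<forall>h\<in>carrier G. \<rho> (g \<otimes>\<^bsub>G\<^esub> h) = \<rho> g * \<rho> h)"

definition irr_crep :: "('a, 'b) monoid_scheme \<Rightarrow> nat \<Rightarrow> ('a \<Rightarrow> complex mat) \<Rightarrow> bool" where
  "irr_crep G n \<rho> \<longleftrightarrow> crep G n \<rho> \<and>
     (\<forall>W. csubspace_vec n W \<and> (\<forall>g\<in>carrier G. \<forall>w\<in>W. \<rho> g *\<^sub>v w \<in> W)
          \<longrightarrow> W = {0\<^sub>v n} \<or> W = carrier_vec n)"

definition Irr :: "('a, 'b) monoid_scheme \<Rightarrow> ('a \<Rightarrow> complex) set" where
  "Irr G = {\<chi>. \<exists>n \<rho>. irr_crep G n \<rho> \<and> \<chi> = (\<lambda>g\<in>carrier G. mat_tr (\<rho> g))}"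

definition char_center :: "('a, 'b) monoid_scheme \<Rightarrow> ('a \<Rightarrow> complex) \<Rightarrow> 'a set" where
  "char_center G \<chi> = {g\<in>carrier G. complex_of_real (cmod (\<chi> g)) = \<chi> \<one>\<^bsub>G\<^esub>}"

definition char_ker :: "('a, 'b) monoid_scheme \<Rightarrow> ('a \<Rightarrow> complex) \<Rightarrow> 'a set" where
  "char_ker G \<chi> = {g\<in>carrier G. \<chi> g = \<chi> \<one>\<^bsub>G\<^esub>}"

definition group_center :: "('a, 'b) monoid_scheme \<Rightarrow> 'a set" where
  "group_center G = {z\<in>carrier G. \<forall>g\<in>carrier G. z \<otimes>\<^bsub>G\<^esub> g = g \<otimes>\<^bsub>G\<^esub> z}"

definition nested :: "('a, 'b) monoid_scheme \<Rightarrow> bool" where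
  "nested G \<longleftrightarrow> (\<forall>\<chi>\<in>Irr G. \<forall>\<psi>\<in>Irr G.
      char_center G \<chi> \<subseteq> char_center G \<psi> \<or> char_center G \<psi> \<subseteq> char_center G \<chi>)"

definition Kgrp :: "('a, 'b) monoid_scheme \<Rightarrow> 'a set" where
  "Kgrp H = (if (\<forall>x\<in>carrier H. \<forall>y\<in>carrier H. x \<otimes>\<^bsub>H\<^esub> y = y \<otimes>\<^bsub>H\<^esub> x) then carrier H
     else carrier H \<inter> \<Inter>{char_ker H \<chi> | \<chi>. \<chi> \<in> Irr H \<and> group_center H \<subset> char_center H \<chi>})"

end

theory Submission
  imports Defs "Jordan_Normal_Form.Jordan_Normal_Form_Existence"
begin

lemma mat_tr_mult_comm:
  assumes A: "A \<in> carrier_mat n m" and B: "B \<in> carrier_mat m n"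
  shows "mat_tr (A * B) = mat_tr (B * A)"
proof -
  have "mat_tr (A * B) = (\<Sum>i<n. \<Sum>k<m. A $$ (i,k) * B $$ (k,i))"
    using A B unfolding mat_tr_def
    by (auto simp: scalar_prod_def lessThan_atLeast0 intro!: sum.cong)
  also have "\<dots> = (\<Sum>k<m. \<Sum>i<n. B $$ (k,i) * A $$ (i,k))"
    by (subst sum.swap) (simp add: mult.commute)
  also have "\<dots> = mat_tr (B * A)"
    using A B unfolding mat_tr_def
    by (auto simp: scalar_prod_def lessThan_atLeast0 intro!: sum.cong)
  finally show ?thesis .
qed

lemma mat_tr_one: "mat_tr (1\<^sub>m n :: complex mat) = of_nat n"
  unfolding mat_tr_def by simp

lemma mat_tr_smult: "A \<in> carrier_mat n n \<Longrightarrow> mat_tr (c \<cdot>\<^sub>m A) = c * mat_tr A"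
  unfolding mat_tr_def by (auto simp: sum_distrib_left)

lemma jb_dims[simp]: "dim_row (jordan_block n a) = n" "dim_col (jordan_block n a) = n"
  by (simp_all add: jordan_block_def)

lemma jb_pow_one:
  fixes a :: complex
  assumes n: "n > 0" and m: "m > 0" and eq: "jordan_block n a ^\<^sub>m m = 1\<^sub>m n"
  shows "n = 1 \<and> a ^ m = 1"
proof -
  have e00: "(jordan_block n a ^\<^sub>m m) $$ (0,0) = a ^ m"
    using n by (simp add: jordan_block_pow)
  hence am: "a ^ m = 1" using eq n by simp
  have "n = 1"
  proof (rule ccontr)
    assume "n \<noteq> 1" with n have n2: "1 < n" by auto
    have "(jordan_block n a ^\<^sub>m m) $$ (0,1) = of_nat m * a ^ (m - 1)"
      using n2 by (simp add: jordan_block_pow)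
    hence "of_nat m * a ^ (m - 1) = 0" using eq n2 by simp
    with m have "a = 0" by auto
    with am m show False by (simp add: power_0_left)
  qed
  with am show ?thesis by simp
qed

lemma jm_pow_one:
  fixes n_as :: "(nat \<times> complex) list"
  assumes pos: "0 \<notin> fst ` set n_as" and m: "m > 0"
    and eq: "jordan_matrix n_as ^\<^sub>m m = 1\<^sub>m (sum_list (map fst n_as))"
  shows "\<forall>(n,a)\<in>set n_as. n = 1 \<and> a ^ m = 1"
  using pos eq
proof (induction n_as)
  case Nil
  then show ?case by simp
next
  case (Cons na n_as)
  obtain n a where na: "na = (n,a)" by force
  let ?s = "sum_list (map fst n_as)"
  let ?X = "jordan_block n a ^\<^sub>m m"
  let ?D = "diag_block_mat (map (\<lambda>(n,a). jordan_block n a ^\<^sub>m m) n_as)"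
  have Dd: "dim_row ?D = ?s" "dim_col ?D = ?s"
    by (simp_all add: dim_diag_block_mat o_def case_prod_unfold, (induction n_as; simp)+)
  have JD: "jordan_matrix n_as ^\<^sub>m m = ?D" by (rule jordan_matrix_pow)
  have "jordan_matrix (na # n_as) ^\<^sub>m m = four_block_mat ?X (0\<^sub>m n ?s) (0\<^sub>m ?s n) ?D"
    unfolding jordan_matrix_pow na using Dd by (simp add: Let_def)
  with Cons.prems(2) have E: "four_block_mat ?X (0\<^sub>m n ?s) (0\<^sub>m ?s n) ?D = 1\<^sub>m (n + ?s)"
    by (simp add: na)
  have "?X = 1\<^sub>m n"
  proof (rule eq_matI)
    fix i j assume "i < dim_row (1\<^sub>m n :: complex mat)" "j < dim_col (1\<^sub>m n :: complex mat)"
    hence ij: "i < n" "j < n" by auto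
    have "four_block_mat ?X (0\<^sub>m n ?s) (0\<^sub>m ?s n) ?D $$ (i,j) = 1\<^sub>m (n + ?s) $$ (i,j)"
      by (simp add: E)
    thus "?X $$ (i,j) = 1\<^sub>m n $$ (i,j)" using ij Dd by (simp split: if_splits)
  qed auto
  moreover have "?D = 1\<^sub>m ?s"
  proof (rule eq_matI)
    fix i j assume "i < dim_row (1\<^sub>m ?s :: complex mat)" "j < dim_col (1\<^sub>m ?s :: complex mat)"
    hence ij: "i < ?s" "j < ?s" by auto
    have "four_block_mat ?X (0\<^sub>m n ?s) (0\<^sub>m ?s n) ?D $$ (n+i,n+j) = 1\<^sub>m (n + ?s) $$ (n+i,n+j)"
      by (simp add: E)
    thus "?D $$ (i,j) = 1\<^sub>m ?s $$ (i,j)" using ij Dd by (simp split: if_splits)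
  qed (use Dd in auto)
  ultimately show ?case using Cons.IH[of] Cons.prems(1) JD jb_pow_one[of n m a] m na by auto
qed

lemma jm_diag:
  fixes n_as :: "(nat \<times> complex) list"
  assumes "\<forall>(n,a)\<in>set n_as. n = 1"
  shows "jordan_matrix n_as = mat (length n_as) (length n_as)
           (\<lambda>(i,j). if i = j then snd (n_as ! i) else 0)"
  using assms
proof (induction n_as)
  case Nil
  then show ?case by (auto simp: jordan_matrix_def)
next
  case (Cons na n_as)
  obtain a where na: "na = (1,a)" using Cons.prems by (cases na) auto
  have s: "sum_list (map fst n_as) = length n_as"
    using Cons.prems by (induction n_as) auto
  show ?case
    unfolding na jordan_matrix_Cons
    using Cons.IH Cons.prems s by (intro eq_matI) (auto simp: na nth_Cons' jordan_block_def)
qed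

lemma unit_sum_eq:
  fixes a :: "nat \<Rightarrow> complex"
  assumes k: "k > 0" and u1: "\<And>i. i < k \<Longrightarrow> cmod (a i) = 1"
    and s: "cmod (\<Sum>i<k. a i) = real k"
  shows "\<forall>i<k. a i = (\<Sum>i<k. a i) / of_nat k"
proof -
  define S where "S = (\<Sum>i<k. a i)"
  define u where "u = S / of_nat k"
  have cu: "cmod u = 1" using s k by (simp add: u_def S_def norm_divide)
  have le: "Re (cnj u * a i) \<le> 1" if "i < k" for i
    using complex_Re_le_cmod[of "cnj u * a i"] u1[OF that] cu by (simp add: norm_mult)
  have "cnj u * S = cnj S * S / of_nat k" by (simp add: u_def)
  also have "cnj S * S = of_real ((cmod S)^2)" by (simp only: complex_norm_square mult.commute)
  also have "(cmod S)^2 = real k * real k" using s by (simp add: S_def power2_eq_square)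
  finally have "cnj u * S = of_nat k" using k by simp
  hence "(\<Sum>i<k. cnj u * a i) = of_nat k" by (simp add: S_def sum_distrib_left)
  hence "Re (\<Sum>i<k. cnj u * a i) = real k" by simp
  hence "(\<Sum>i<k. Re (cnj u * a i)) = real k" by (simp only: Re_sum)
  hence "(\<Sum>i<k. (1 - Re (cnj u * a i))) = 0" by (simp add: sum_subtractf)
  hence eq1: "\<forall>i\<in>{..<k}. 1 - Re (cnj u * a i) = 0"
    by (subst sum_nonneg_eq_0_iff[symmetric]) (use le in auto)
  show ?thesis
  proof (intro allI impI)
    fix i assume i: "i < k"
    let ?z = "cnj u * a i"
    have r: "Re ?z = 1" using eq1 i by auto
    have n: "cmod ?z = 1" using u1[OF i] cu by (simp add: norm_mult)
    have "(cmod ?z)^2 = (Re ?z)^2 + (Im ?z)^2" by (rule cmod_power2)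
    hence "Im ?z = 0" using r n by simp
    hence z1: "?z = 1" using r by (simp add: complex_eq_iff)
    have "u * ?z = (u * cnj u) * a i" by (simp add: mult.assoc)
    also have "u * cnj u = 1" using cu by (simp add: complex_norm_square[symmetric])
    finally have "a i = u" using z1 by simp
    thus "a i = (\<Sum>i<k. a i) / of_nat k" by (simp add: u_def S_def)
  qed
qed

lemma conj_cancel:
  fixes P Q M :: "complex mat"
  assumes P: "P \<in> carrier_mat n n" and Q: "Q \<in> carrier_mat n n" and M: "M \<in> carrier_mat n n"
    and QP: "Q * P = 1\<^sub>m n"
  shows "Q * (P * M * Q) * P = M"
proof -
  have PM: "P * M \<in> carrier_mat n n" using P M by simp
  have PMQ: "P * M * Q \<in> carrier_mat n n" using PM Q by simp
  have "Q * (P * M * Q) * P = Q * (P * M * Q * P)" by (rule assoc_mult_mat[OF Q PMQ P])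
  also have "P * M * Q * P = P * M * (Q * P)" by (rule assoc_mult_mat[OF PM Q P])
  also have "\<dots> = P * M" by (simp add: QP right_mult_one_mat[OF PM])
  also have "Q * (P * M) = Q * P * M" by (rule assoc_mult_mat[OF Q P M, symmetric])
  also have "\<dots> = M" using QP M by simp
  finally show ?thesis .
qed

lemma finite_order_scalar:
  fixes A :: "complex mat"
  assumes A: "A \<in> carrier_mat n n" and m: "m > 0" and Am: "A ^\<^sub>m m = 1\<^sub>m n"
    and tr: "cmod (mat_tr A) = real n"
  shows "\<exists>c. A = c \<cdot>\<^sub>m 1\<^sub>m n"
proof (cases "n = 0")
  case True
  then show ?thesis using A by (intro exI[of _ 0] eq_matI) auto
next
  case False
  hence n: "n > 0" by simp
  obtain as where "char_poly A = (\<Prod>a\<leftarrow>as. [:- a, 1:])"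
    using char_poly_factorized[OF A] by blast
  from jordan_nf_exists[OF A this] obtain n_as where jnf: "jordan_nf A n_as" by blast
  let ?J = "jordan_matrix n_as"
  from jnf have pos: "0 \<notin> fst ` set n_as" and sim: "similar_mat A ?J"
    unfolding jordan_nf_def by auto
  from sim obtain P Q where wit: "similar_mat_wit A ?J P Q" unfolding similar_mat_def by blast
  have dA: "dim_row A = n" using A by simp
  from wit have carr: "A \<in> carrier_mat n n" "?J \<in> carrier_mat n n" "P \<in> carrier_mat n n" "Q \<in> carrier_mat n n"
    and PQ: "P * Q = 1\<^sub>m n" and QP: "Q * P = 1\<^sub>m n" and AJ: "A = P * ?J * Q"
    unfolding similar_mat_wit_def Let_def dA by auto
  have sumn: "sum_list (map fst n_as) = n" using carr(2) jordan_matrix_dim(1)[of n_as] by (metis carrier_matD(1))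
  have Jm: "?J ^\<^sub>m m \<in> carrier_mat n n" using carr by simp
  have "A ^\<^sub>m m = P * ?J ^\<^sub>m m * Q" by (rule similar_mat_wit_pow_id[OF wit])
  hence "Q * (A ^\<^sub>m m) * P = ?J ^\<^sub>m m"
    using conj_cancel[OF carr(3,4) Jm QP] by simp
  hence "?J ^\<^sub>m m = Q * (1\<^sub>m n) * P" using Am by simp
  also have "\<dots> = 1\<^sub>m n" using carr QP by simp
  finally have Jm1: "?J ^\<^sub>m m = 1\<^sub>m (sum_list (map fst n_as))" using sumn by simp
  from jm_pow_one[OF pos m Jm1] have ones: "\<forall>(n,a)\<in>set n_as. n = 1 \<and> a ^ m = 1" .
  hence ones': "\<forall>(n,a)\<in>set n_as. n = 1" by auto
  have len: "length n_as = n"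
  proof -
    have "sum_list (map fst n_as) = length n_as" using ones' by (induction n_as) auto
    thus ?thesis using sumn by simp
  qed
  define d where "d i = snd (n_as ! i)" for i
  have Jd: "?J = mat n n (\<lambda>(i,j). if i = j then d i else 0)"
    unfolding d_def using jm_diag[OF ones'] len by simp
  have dm: "d i ^ m = 1" if "i < n" for i
  proof -
    have "n_as ! i \<in> set n_as" using that len by simp
    with ones show ?thesis unfolding d_def by (cases "n_as ! i") auto
  qed
  have d1: "cmod (d i) = 1" if "i < n" for i
    using power_eq_1_iff[OF dm[OF that]] m by simp
  have "mat_tr A = mat_tr (Q * (P * ?J))"
    using AJ mat_tr_mult_comm[of "P * ?J" n n Q] carr by simp
  also have "\<dots> = mat_tr ?J" using carr QP by (simp add: assoc_mult_mat[of _ n n _ n _ n, symmetric] left_mult_one_mat[OF carr(2)])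
  also have "\<dots> = (\<Sum>i<n. d i)" unfolding Jd mat_tr_def by simp
  finally have "cmod (\<Sum>i<n. d i) = real n" using tr by simp
  from unit_sum_eq[OF n d1 this] obtain c where dc: "\<And>i. i < n \<Longrightarrow> d i = c" by blast
  have "?J = c \<cdot>\<^sub>m 1\<^sub>m n" unfolding Jd by (intro eq_matI) (auto simp: dc)
  hence "A = P * (c \<cdot>\<^sub>m 1\<^sub>m n) * Q" using AJ by simp
  also have "\<dots> = c \<cdot>\<^sub>m (P * Q)"
    using carr by (simp add: mult_smult_distrib[OF carr(3) one_carrier_mat]
      mult_smult_assoc_mat[OF _ carr(4)] right_mult_one_mat[OF carr(3)])
  finally show ?thesis using PQ by auto
qed

lemma mat_eq_by_vec:
  fixes A B :: "complex mat"
  assumes A: "A \<in> carrier_mat n n" and B: "B \<in> carrier_mat n n"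
    and eq: "\<And>w. w \<in> carrier_vec n \<Longrightarrow> A *\<^sub>v w = B *\<^sub>v w"
  shows "A = B"
proof (rule eq_matI)
  fix i j assume "i < dim_row B" "j < dim_col B"
  hence ij: "i < n" "j < n" using B by auto
  have "(A *\<^sub>v unit_vec n j) $ i = (B *\<^sub>v unit_vec n j) $ i" using eq[of "unit_vec n j"] by simp
  thus "A $$ (i,j) = B $$ (i,j)" using A B ij by (simp add: row_def)
qed (use A B in auto)

lemma schur_scalar:
  fixes \<rho> :: "'a \<Rightarrow> complex mat"
  assumes irr: "irr_crep G n \<rho>" and z: "z \<in> carrier G"
    and comm: "\<forall>g\<in>carrier G. \<rho> z * \<rho> g = \<rho> g * \<rho> z"
  shows "\<exists>c. \<rho> z = c \<cdot>\<^sub>m 1\<^sub>m n"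
proof -
  from irr have cr: "crep G n \<rho>" and irrW: "\<And>W. csubspace_vec n W \<Longrightarrow>
      (\<forall>g\<in>carrier G. \<forall>w\<in>W. \<rho> g *\<^sub>v w \<in> W) \<Longrightarrow> W = {0\<^sub>v n} \<or> W = carrier_vec n"
    unfolding irr_crep_def by blast+
  from cr have n: "n > 0" and carr: "\<And>g. g \<in> carrier G \<Longrightarrow> \<rho> g \<in> carrier_mat n n"
    unfolding crep_def by auto
  define A where "A = \<rho> z"
  have A: "A \<in> carrier_mat n n" using carr[OF z] by (simp add: A_def)
  obtain as where cp: "char_poly A = (\<Prod>a\<leftarrow>as. [:- a, 1:])" and len: "length as = n"
    using char_poly_factorized[OF A] by blast
  from len n obtain c rest where as: "as = c # rest" by (cases as) auto
  have "poly (char_poly A) c = 0" unfolding cp as by simp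
  hence "eigenvalue A c" using eigenvalue_root_char_poly[OF A] by simp
  then obtain v where ev: "eigenvector A v c" unfolding eigenvalue_def by blast
  hence v: "v \<in> carrier_vec n" "v \<noteq> 0\<^sub>v n" "A *\<^sub>v v = c \<cdot>\<^sub>v v"
    unfolding eigenvector_def using A by auto
  define W where "W = {w \<in> carrier_vec n. A *\<^sub>v w = c \<cdot>\<^sub>v w}"
  have sub: "csubspace_vec n W"
    unfolding csubspace_vec_def W_def
  proof (intro conjI ballI allI)
    show "{w \<in> carrier_vec n. A *\<^sub>v w = c \<cdot>\<^sub>v w} \<subseteq> carrier_vec n" by auto
    show "0\<^sub>v n \<in> {w \<in> carrier_vec n. A *\<^sub>v w = c \<cdot>\<^sub>v w}" using A by auto
  next
    fix x y assume x: "x \<in> {w \<in> carrier_vec n. A *\<^sub>v w = c \<cdot>\<^sub>v w}"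
      and y: "y \<in> {w \<in> carrier_vec n. A *\<^sub>v w = c \<cdot>\<^sub>v w}"
    thus "x + y \<in> {w \<in> carrier_vec n. A *\<^sub>v w = c \<cdot>\<^sub>v w}"
      using A by (auto simp: mult_add_distrib_mat_vec[OF A] smult_add_distrib_vec)
  next
    fix d x assume x: "x \<in> {w \<in> carrier_vec n. A *\<^sub>v w = c \<cdot>\<^sub>v w}"
    thus "d \<cdot>\<^sub>v x \<in> {w \<in> carrier_vec n. A *\<^sub>v w = c \<cdot>\<^sub>v w}"
      using A by (auto simp: mult_mat_vec[OF A] smult_smult_assoc mult.commute)
  qed
  have inv: "\<forall>g\<in>carrier G. \<forall>w\<in>W. \<rho> g *\<^sub>v w \<in> W"
  proof (intro ballI)
    fix g w assume g: "g \<in> carrier G" and w: "w \<in> W"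
    have Rg: "\<rho> g \<in> carrier_mat n n" using carr[OF g] .
    have wc: "w \<in> carrier_vec n" and Aw: "A *\<^sub>v w = c \<cdot>\<^sub>v w" using w by (auto simp: W_def)
    have "A *\<^sub>v (\<rho> g *\<^sub>v w) = (A * \<rho> g) *\<^sub>v w" using A Rg wc by simp
    also have "A * \<rho> g = \<rho> g * A" using comm g by (simp add: A_def)
    also have "(\<rho> g * A) *\<^sub>v w = \<rho> g *\<^sub>v (c \<cdot>\<^sub>v w)" using A Rg wc Aw by simp
    also have "\<dots> = c \<cdot>\<^sub>v (\<rho> g *\<^sub>v w)" by (rule mult_mat_vec[OF Rg wc])
    finally show "\<rho> g *\<^sub>v w \<in> W" using Rg wc by (simp add: W_def)
  qed
  have "v \<in> W" using v by (simp add: W_def)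
  with irrW[OF sub inv] v have Wall: "W = carrier_vec n" by auto
  have "A = c \<cdot>\<^sub>m 1\<^sub>m n"
  proof (rule mat_eq_by_vec[OF A])
    fix w :: "complex vec" assume w: "w \<in> carrier_vec n"
    hence "A *\<^sub>v w = c \<cdot>\<^sub>v w" using Wall by (auto simp: W_def)
    also have "\<dots> = (c \<cdot>\<^sub>m 1\<^sub>m n) *\<^sub>v w" using w by (intro eq_vecI) (auto simp: row_smult)
    finally show "A *\<^sub>v w = (c \<cdot>\<^sub>m 1\<^sub>m n) *\<^sub>v w" .
  qed simp
  thus ?thesis unfolding A_def by blast
qed

lemma smult_one_pow:
  "(c \<cdot>\<^sub>m 1\<^sub>m n :: complex mat) ^\<^sub>m k = c ^ k \<cdot>\<^sub>m 1\<^sub>m n"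
proof (induction k)
  case 0 then show ?case by (intro eq_matI) auto
next
  case (Suc k)
  have "(c \<cdot>\<^sub>m 1\<^sub>m n :: complex mat) ^\<^sub>m Suc k = (c ^ k \<cdot>\<^sub>m 1\<^sub>m n) * (c \<cdot>\<^sub>m 1\<^sub>m n)"
    using Suc by simp
  also have "\<dots> = c ^ k \<cdot>\<^sub>m (1\<^sub>m n * (c \<cdot>\<^sub>m 1\<^sub>m n))"
    by (rule mult_smult_assoc_mat[of _ n n _ n]) auto
  also have "1\<^sub>m n * (c \<cdot>\<^sub>m 1\<^sub>m n) = c \<cdot>\<^sub>m 1\<^sub>m n"
    by (rule left_mult_one_mat) auto
  also have "c ^ k \<cdot>\<^sub>m (c \<cdot>\<^sub>m 1\<^sub>m n) = (c ^ Suc k) \<cdot>\<^sub>m (1\<^sub>m n :: complex mat)"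
    by (intro eq_matI) auto
  finally show ?case .
qed

lemma crep_carrier: "crep G n \<rho> \<Longrightarrow> g \<in> carrier G \<Longrightarrow> \<rho> g \<in> carrier_mat n n"
  unfolding crep_def by auto

lemma crep_one: "crep G n \<rho> \<Longrightarrow> \<rho> \<one>\<^bsub>G\<^esub> = 1\<^sub>m n"
  unfolding crep_def by auto

lemma crep_mult: "crep G n \<rho> \<Longrightarrow> g \<in> carrier G \<Longrightarrow> h \<in> carrier G \<Longrightarrow>
    \<rho> (g \<otimes>\<^bsub>G\<^esub> h) = \<rho> g * \<rho> h"
  unfolding crep_def by auto

lemma crep_pos: "crep G n \<rho> \<Longrightarrow> n > 0"
  unfolding crep_def by auto

lemma crep_pow:
  assumes grp: "group G" and cr: "crep G n \<rho>" and x: "x \<in> carrier G"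
  shows "\<rho> (x [^]\<^bsub>G\<^esub> (k::nat)) = \<rho> x ^\<^sub>m k"
proof (induction k)
  case 0
  then show ?case using crep_one[OF cr] crep_carrier[OF cr x] by simp
next
  case (Suc k)
  have "x [^]\<^bsub>G\<^esub> Suc k = x [^]\<^bsub>G\<^esub> k \<otimes>\<^bsub>G\<^esub> x"
    using grp by (simp add: group.is_monoid monoid.nat_pow_Suc)
  moreover have "x [^]\<^bsub>G\<^esub> k \<in> carrier G"
    using grp x by (simp add: group.is_monoid monoid.nat_pow_closed)
  ultimately show ?case using Suc crep_mult[OF cr _ x] by simp
qed

lemma crep_ord:
  assumes grp: "group G" and fin: "finite (carrier G)" and cr: "crep G n \<rho>" and x: "x \<in> carrier G"
  shows "\<rho> x ^\<^sub>m group.ord G x = 1\<^sub>m n" "group.ord G x > 0"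
proof -
  have "x [^]\<^bsub>G\<^esub> group.ord G x = \<one>\<^bsub>G\<^esub>" using group.pow_ord_eq_1[OF grp x] .
  hence "\<rho> (x [^]\<^bsub>G\<^esub> group.ord G x) = 1\<^sub>m n" using crep_one[OF cr] by simp
  thus "\<rho> x ^\<^sub>m group.ord G x = 1\<^sub>m n" using crep_pow[OF grp cr x] by simp
  show "group.ord G x > 0" using group.ord_ge_1[OF grp fin x] by simp
qed

lemma crep_abs_tr_scalar:
  assumes grp: "group G" and fin: "finite (carrier G)" and cr: "crep G n \<rho>" and x: "x \<in> carrier G"
    and tr: "cmod (mat_tr (\<rho> x)) = real n"
  shows "\<exists>c. \<rho> x = c \<cdot>\<^sub>m 1\<^sub>m n"
  using finite_order_scalar[OF crep_carrier[OF cr x] crep_ord(2)[OF grp fin cr x]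
      crep_ord(1)[OF grp fin cr x] tr] .

lemma crep_tr_one:
  assumes grp: "group G" and fin: "finite (carrier G)" and cr: "crep G n \<rho>" and x: "x \<in> carrier G"
    and tr: "mat_tr (\<rho> x) = of_nat n"
  shows "\<rho> x = 1\<^sub>m n"
proof -
  have "cmod (mat_tr (\<rho> x)) = real n" using tr by simp
  from crep_abs_tr_scalar[OF grp fin cr x this] obtain c where c: "\<rho> x = c \<cdot>\<^sub>m 1\<^sub>m n" by blast
  have "mat_tr (\<rho> x) = c * of_nat n" unfolding c
    using mat_tr_smult[of "1\<^sub>m n" n c] by (simp add: mat_tr_one)
  with tr crep_pos[OF cr] have "c = 1" by simp
  with c show ?thesis by (intro eq_matI) auto
qed

lemma center_in_char_center:
  assumes grp: "group G" and fin: "finite (carrier G)" and irr: "irr_crep G n \<rho>"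
    and z: "z \<in> group_center G"
  shows "cmod (mat_tr (\<rho> z)) = real n"
proof -
  have cr: "crep G n \<rho>" using irr unfolding irr_crep_def by blast
  have zc: "z \<in> carrier G" and zcomm: "\<forall>g\<in>carrier G. z \<otimes>\<^bsub>G\<^esub> g = g \<otimes>\<^bsub>G\<^esub> z"
    using z unfolding group_center_def by auto
  have "\<forall>g\<in>carrier G. \<rho> z * \<rho> g = \<rho> g * \<rho> z"
  proof
    fix g assume g: "g \<in> carrier G"
    have "\<rho> z * \<rho> g = \<rho> (z \<otimes>\<^bsub>G\<^esub> g)" using crep_mult[OF cr zc g] by simp
    also have "\<dots> = \<rho> (g \<otimes>\<^bsub>G\<^esub> z)" using zcomm g by simp
    also have "\<dots> = \<rho> g * \<rho> z" using crep_mult[OF cr g zc] by simp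
    finally show "\<rho> z * \<rho> g = \<rho> g * \<rho> z" .
  qed
  from schur_scalar[OF irr zc this] obtain c where c: "\<rho> z = c \<cdot>\<^sub>m 1\<^sub>m n" by blast
  have "(c \<cdot>\<^sub>m 1\<^sub>m n) ^\<^sub>m group.ord G z = 1\<^sub>m n" using crep_ord(1)[OF grp fin cr zc] c by simp
  hence "c ^ group.ord G z \<cdot>\<^sub>m 1\<^sub>m n = 1\<^sub>m n" by (simp add: smult_one_pow)
  hence "(c ^ group.ord G z \<cdot>\<^sub>m 1\<^sub>m n) $$ (0,0) = (1\<^sub>m n :: complex mat) $$ (0,0)" by simp
  hence "c ^ group.ord G z = 1" using crep_pos[OF cr] by simp
  from power_eq_1_iff[OF this] have "cmod c = 1" using crep_ord(2)[OF grp fin cr zc] by simp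
  thus ?thesis unfolding c using mat_tr_smult[of "1\<^sub>m n" n c] by (simp add: mat_tr_one norm_mult)
qed

section \<open>Quotients\<close>

lemma quot_carrier_iff:
  "C \<in> carrier (G Mod N) \<longleftrightarrow> (\<exists>a\<in>carrier G. C = N #>\<^bsub>G\<^esub> a)"
  by (auto simp: carrier_FactGroup)

lemma quot_mult:
  assumes "N \<lhd> G" "a \<in> carrier G" "b \<in> carrier G"
  shows "(N #>\<^bsub>G\<^esub> a) \<otimes>\<^bsub>G Mod N\<^esub> (N #>\<^bsub>G\<^esub> b) = N #>\<^bsub>G\<^esub> (a \<otimes>\<^bsub>G\<^esub> b)"
  using normal.rcos_sum[OF assms] by simp

lemma quot_one:
  assumes "N \<lhd> G"
  shows "\<one>\<^bsub>G Mod N\<^esub> = N #>\<^bsub>G\<^esub> \<one>\<^bsub>G\<^esub>"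
proof -
  have "group G" "N \<subseteq> carrier G" using assms
    by (auto simp: normal_def subgroup_def)
  thus ?thesis by (simp add: group.coset_mult_one)
qed

lemma quot_group: "N \<lhd> G \<Longrightarrow> group (G Mod N)"
  by (rule normal.factorgroup_is_group)

lemma quot_finite: "finite (carrier G) \<Longrightarrow> finite (carrier (G Mod N))"
  by (simp add: carrier_FactGroup)

lemma inflate:
  assumes nN: "N \<lhd> G" and irr: "irr_crep (G Mod N) n \<sigma>"
  shows "irr_crep G n (\<lambda>a. \<sigma> (N #>\<^bsub>G\<^esub> a))"
proof -
  have grp: "group G" using nN by (simp add: normal_def)
  have sub: "N \<subseteq> carrier G" using nN by (auto simp: normal_def subgroup_def)
  have cr: "crep (G Mod N) n \<sigma>" using irr unfolding irr_crep_def by blast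
  have inC: "N #>\<^bsub>G\<^esub> a \<in> carrier (G Mod N)" if "a \<in> carrier G" for a
    using that quot_carrier_iff[of _ G N] by blast
  have "crep G n (\<lambda>a. \<sigma> (N #>\<^bsub>G\<^esub> a))"
    unfolding crep_def
  proof (intro conjI ballI)
    show "0 < n" using crep_pos[OF cr] .
  next
    fix g assume "g \<in> carrier G"
    thus "\<sigma> (N #>\<^bsub>G\<^esub> g) \<in> carrier_mat n n" by (rule crep_carrier[OF cr inC])
  next
    show "\<sigma> (N #>\<^bsub>G\<^esub> \<one>\<^bsub>G\<^esub>) = 1\<^sub>m n" using crep_one[OF cr] unfolding quot_one[OF nN] .
  next
    fix g h assume g: "g \<in> carrier G" and h: "h \<in> carrier G"
    have "\<sigma> (N #>\<^bsub>G\<^esub> (g \<otimes>\<^bsub>G\<^esub> h)) =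
        \<sigma> ((N #>\<^bsub>G\<^esub> g) \<otimes>\<^bsub>G Mod N\<^esub> (N #>\<^bsub>G\<^esub> h))"
      using quot_mult[OF nN g h] by simp
    also have "\<dots> = \<sigma> (N #>\<^bsub>G\<^esub> g) * \<sigma> (N #>\<^bsub>G\<^esub> h)"
      using crep_mult[OF cr inC[OF g] inC[OF h]] .
    finally show "\<sigma> (N #>\<^bsub>G\<^esub> (g \<otimes>\<^bsub>G\<^esub> h)) = \<sigma> (N #>\<^bsub>G\<^esub> g) * \<sigma> (N #>\<^bsub>G\<^esub> h)" .
  qed
  moreover have "W = {0\<^sub>v n} \<or> W = carrier_vec n"
    if W: "csubspace_vec n W" and inv: "\<forall>g\<in>carrier G. \<forall>w\<in>W. \<sigma> (N #>\<^bsub>G\<^esub> g) *\<^sub>v w \<in> W" for W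
  proof -
    have "\<forall>C\<in>carrier (G Mod N). \<forall>w\<in>W. \<sigma> C *\<^sub>v w \<in> W"
    proof (intro ballI)
      fix C w assume C: "C \<in> carrier (G Mod N)" and w: "w \<in> W"
      obtain a where a: "a \<in> carrier G" and Ca: "C = N #>\<^bsub>G\<^esub> a"
        using C quot_carrier_iff[of C G N] by blast
      show "\<sigma> C *\<^sub>v w \<in> W" using inv a w unfolding Ca by blast
    qed
    thus ?thesis using irr W unfolding irr_crep_def by blast
  qed
  ultimately show ?thesis unfolding irr_crep_def by blast
qed

lemma coset_rep_eq:
  assumes nN: "N \<lhd> G" and cr: "crep G n \<rho>" and ker: "\<forall>h\<in>N. \<rho> h = 1\<^sub>m n"
    and a: "a \<in> carrier G" and b: "b \<in> N #>\<^bsub>G\<^esub> a"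
  shows "\<rho> b = \<rho> a"
proof -
  have sub: "N \<subseteq> carrier G" using nN by (auto simp: normal_def subgroup_def)
  from b obtain h where h: "h \<in> N" and bh: "b = h \<otimes>\<^bsub>G\<^esub> a" unfolding r_coset_def by blast
  have "\<rho> b = \<rho> h * \<rho> a" using crep_mult[OF cr _ a] h sub bh by auto
  also have "\<dots> = \<rho> a" using ker h crep_carrier[OF cr a] by simp
  finally show ?thesis .
qed

lemma coset_some_eq:
  assumes nN: "N \<lhd> G" and cr: "crep G n \<rho>" and ker: "\<forall>h\<in>N. \<rho> h = 1\<^sub>m n"
    and a: "a \<in> carrier G"
  shows "\<rho> (SOME b. b \<in> N #>\<^bsub>G\<^esub> a) = \<rho> a"
proof -
  have grp: "group G" using nN by (simp add: normal_def)
  have "a \<in> N #>\<^bsub>G\<^esub> a" using group.rcos_self[OF grp a] nN by (simp add: normal_def)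
  hence "(SOME b. b \<in> N #>\<^bsub>G\<^esub> a) \<in> N #>\<^bsub>G\<^esub> a" by (rule someI)
  thus ?thesis using coset_rep_eq[OF nN cr ker a] by blast
qed

lemma deflate:
  assumes nN: "N \<lhd> G" and irr: "irr_crep G n \<rho>" and ker: "\<forall>h\<in>N. \<rho> h = 1\<^sub>m n"
  shows "irr_crep (G Mod N) n (\<lambda>C. \<rho> (SOME b. b \<in> C))"
proof -
  have cr: "crep G n \<rho>" using irr unfolding irr_crep_def by blast
  note se = coset_some_eq[OF nN cr ker]
  have "crep (G Mod N) n (\<lambda>C. \<rho> (SOME b. b \<in> C))"
    unfolding crep_def
  proof (intro conjI ballI)
    show "0 < n" using crep_pos[OF cr] .
  next
    fix C assume "C \<in> carrier (G Mod N)"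
    then obtain a where a: "a \<in> carrier G" and C: "C = N #>\<^bsub>G\<^esub> a" using quot_carrier_iff[of _ G N] by blast
    show "\<rho> (SOME b. b \<in> C) \<in> carrier_mat n n" using se[OF a] crep_carrier[OF cr a] C by simp
  next
    have "\<rho> (SOME b. b \<in> N #>\<^bsub>G\<^esub> \<one>\<^bsub>G\<^esub>) = 1\<^sub>m n"
      using se[of "\<one>\<^bsub>G\<^esub>"] crep_one[OF cr] nN by (simp add: normal_def group.is_monoid)
    thus "\<rho> (SOME b. b \<in> \<one>\<^bsub>G Mod N\<^esub>) = 1\<^sub>m n" using quot_one[OF nN] by simp
  next
    fix C D assume C0: "C \<in> carrier (G Mod N)" and D0: "D \<in> carrier (G Mod N)"
    obtain a where a: "a \<in> carrier G" and C: "C = N #>\<^bsub>G\<^esub> a"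
      using C0 quot_carrier_iff[of _ G N] by blast
    obtain b where b: "b \<in> carrier G" and D: "D = N #>\<^bsub>G\<^esub> b"
      using D0 quot_carrier_iff[of _ G N] by blast
    have ab: "a \<otimes>\<^bsub>G\<^esub> b \<in> carrier G" using a b nN by (simp add: normal_def group.is_monoid monoid.m_closed)
    show "\<rho> (SOME x. x \<in> C \<otimes>\<^bsub>G Mod N\<^esub> D) = \<rho> (SOME x. x \<in> C) * \<rho> (SOME x. x \<in> D)"
      unfolding C D quot_mult[OF nN a b] se[OF ab] se[OF a] se[OF b]
      using crep_mult[OF cr a b] .
  qed
  moreover have "W = {0\<^sub>v n} \<or> W = carrier_vec n"
    if W: "csubspace_vec n W"
      and inv: "\<forall>C\<in>carrier (G Mod N). \<forall>w\<in>W. \<rho> (SOME b. b \<in> C) *\<^sub>v w \<in> W" for W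
  proof -
    have "\<forall>g\<in>carrier G. \<forall>w\<in>W. \<rho> g *\<^sub>v w \<in> W"
    proof (intro ballI)
      fix g w assume g: "g \<in> carrier G" and w: "w \<in> W"
      have "N #>\<^bsub>G\<^esub> g \<in> carrier (G Mod N)" using g quot_carrier_iff[of _ G N] by blast
      with inv w have "\<rho> (SOME b. b \<in> N #>\<^bsub>G\<^esub> g) *\<^sub>v w \<in> W" by blast
      thus "\<rho> g *\<^sub>v w \<in> W" using se[OF g] by simp
    qed
    thus ?thesis using irr W unfolding irr_crep_def by blast
  qed
  ultimately show ?thesis unfolding irr_crep_def by blast
qed

section \<open>Kernels\<close>

lemma crep_inv:
  assumes grp: "group G" and cr: "crep G n \<rho>" and a: "a \<in> carrier G"
  shows "\<rho> a * \<rho> (inv\<^bsub>G\<^esub> a) = 1\<^sub>m n" "\<rho> (inv\<^bsub>G\<^esub> a) * \<rho> a = 1\<^sub>m n"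
proof -
  have ia: "inv\<^bsub>G\<^esub> a \<in> carrier G" using group.inv_closed[OF grp a] .
  show "\<rho> a * \<rho> (inv\<^bsub>G\<^esub> a) = 1\<^sub>m n"
    using crep_mult[OF cr a ia] group.r_inv[OF grp a] crep_one[OF cr] by simp
  show "\<rho> (inv\<^bsub>G\<^esub> a) * \<rho> a = 1\<^sub>m n"
    using crep_mult[OF cr ia a] group.l_inv[OF grp a] crep_one[OF cr] by simp
qed

lemma crep_ker_inv:
  assumes grp: "group G" and cr: "crep G n \<rho>" and a: "a \<in> carrier G" and e: "\<rho> a = 1\<^sub>m n"
  shows "\<rho> (inv\<^bsub>G\<^esub> a) = 1\<^sub>m n"
proof -
  have ia: "inv\<^bsub>G\<^esub> a \<in> carrier G" using group.inv_closed[OF grp a] .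
  have "\<rho> (inv\<^bsub>G\<^esub> a) = \<rho> (inv\<^bsub>G\<^esub> a) * \<rho> a"
    using e crep_carrier[OF cr ia] by simp
  also have "\<dots> = 1\<^sub>m n" by (rule crep_inv(2)[OF grp cr a])
  finally show ?thesis .
qed

lemma crep_ker_mult:
  assumes cr: "crep G n \<rho>" and a: "a \<in> carrier G" and b: "b \<in> carrier G"
    and ea: "\<rho> a = 1\<^sub>m n" and eb: "\<rho> b = 1\<^sub>m n"
  shows "\<rho> (a \<otimes>\<^bsub>G\<^esub> b) = 1\<^sub>m n"
  using crep_mult[OF cr a b] ea eb by simp

lemma crep_ker_conj:
  assumes grp: "group G" and cr: "crep G n \<rho>" and x: "x \<in> carrier G" and h: "h \<in> carrier G"
    and e: "\<rho> h = 1\<^sub>m n"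
  shows "\<rho> (x \<otimes>\<^bsub>G\<^esub> h \<otimes>\<^bsub>G\<^esub> inv\<^bsub>G\<^esub> x) = 1\<^sub>m n"
proof -
  have ix: "inv\<^bsub>G\<^esub> x \<in> carrier G" using group.inv_closed[OF grp x] .
  have xh: "x \<otimes>\<^bsub>G\<^esub> h \<in> carrier G" using grp x h by (simp add: group.is_monoid monoid.m_closed)
  have "\<rho> (x \<otimes>\<^bsub>G\<^esub> h \<otimes>\<^bsub>G\<^esub> inv\<^bsub>G\<^esub> x) = \<rho> x * \<rho> h * \<rho> (inv\<^bsub>G\<^esub> x)"
    using crep_mult[OF cr xh ix] crep_mult[OF cr x h] by simp
  also have "\<dots> = \<rho> x * \<rho> (inv\<^bsub>G\<^esub> x)" using e crep_carrier[OF cr x] by simp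
  also have "\<dots> = 1\<^sub>m n" by (rule crep_inv(1)[OF grp cr x])
  finally show ?thesis .
qed

lemma two_ker_normal:
  assumes grp: "group G" and c1: "crep G n1 \<rho>1" and c2: "crep G n2 \<rho>2"
  shows "{a \<in> carrier G. \<rho>1 a = 1\<^sub>m n1 \<and> \<rho>2 a = 1\<^sub>m n2} \<lhd> G"
proof -
  let ?N = "{a \<in> carrier G. \<rho>1 a = 1\<^sub>m n1 \<and> \<rho>2 a = 1\<^sub>m n2}"
  have one: "\<one>\<^bsub>G\<^esub> \<in> ?N" using crep_one[OF c1] crep_one[OF c2] grp
    by (simp add: group.is_monoid monoid.one_closed)
  have sg: "subgroup ?N G"
  proof (rule group.subgroupI[OF grp])
    show "?N \<subseteq> carrier G" by auto
    show "?N \<noteq> {}" using one by blast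
  next
    fix a assume "a \<in> ?N"
    thus "inv\<^bsub>G\<^esub> a \<in> ?N"
      using crep_ker_inv[OF grp c1] crep_ker_inv[OF grp c2] group.inv_closed[OF grp] by auto
  next
    fix a b assume "a \<in> ?N" "b \<in> ?N"
    thus "a \<otimes>\<^bsub>G\<^esub> b \<in> ?N"
      using crep_ker_mult[OF c1] crep_ker_mult[OF c2] grp by (auto simp: group.is_monoid monoid.m_closed)
  qed
  have "\<forall>x\<in>carrier G. \<forall>h\<in>?N. x \<otimes>\<^bsub>G\<^esub> h \<otimes>\<^bsub>G\<^esub> inv\<^bsub>G\<^esub> x \<in> ?N"
  proof (intro ballI)
    fix x h assume x: "x \<in> carrier G" and h: "h \<in> ?N"
    have "x \<otimes>\<^bsub>G\<^esub> h \<otimes>\<^bsub>G\<^esub> inv\<^bsub>G\<^esub> x \<in> carrier G"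
      using grp x h by (auto simp: group.is_monoid monoid.m_closed group.inv_closed)
    thus "x \<otimes>\<^bsub>G\<^esub> h \<otimes>\<^bsub>G\<^esub> inv\<^bsub>G\<^esub> x \<in> ?N"
      using crep_ker_conj[OF grp c1 x] crep_ker_conj[OF grp c2 x] h by auto
  qed
  with sg show ?thesis using group.normal_inv_iff[OF grp] by blast
qed

section \<open>Characters\<close>

lemma char_center_rep:
  assumes grp: "group G" and cr: "crep G n \<rho>"
  shows "char_center G (\<lambda>g\<in>carrier G. mat_tr (\<rho> g)) = {g \<in> carrier G. cmod (mat_tr (\<rho> g)) = real n}"
proof -
  have one: "\<one>\<^bsub>G\<^esub> \<in> carrier G" using grp by (simp add: group.is_monoid monoid.one_closed)
  have "(\<lambda>g\<in>carrier G. mat_tr (\<rho> g)) \<one>\<^bsub>G\<^esub> = of_nat n"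
    using one crep_one[OF cr] by (simp add: mat_tr_one)
  moreover have iff: "\<And>r::real. (complex_of_real r = of_nat n) = (r = real n)"
    by (metis of_real_eq_iff of_real_of_nat_eq)
  ultimately show ?thesis unfolding char_center_def by (auto simp: iff)
qed

lemma char_ker_rep:
  assumes grp: "group G" and cr: "crep G n \<rho>"
  shows "char_ker G (\<lambda>g\<in>carrier G. mat_tr (\<rho> g)) = {g \<in> carrier G. mat_tr (\<rho> g) = of_nat n}"
proof -
  have one: "\<one>\<^bsub>G\<^esub> \<in> carrier G" using grp by (simp add: group.is_monoid monoid.one_closed)
  have "(\<lambda>g\<in>carrier G. mat_tr (\<rho> g)) \<one>\<^bsub>G\<^esub> = of_nat n"
    using one crep_one[OF cr] by (simp add: mat_tr_one)
  thus ?thesis unfolding char_ker_def by auto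
qed

lemma IrrE:
  assumes "\<chi> \<in> Irr G"
  obtains n \<rho> where "irr_crep G n \<rho>" "\<chi> = (\<lambda>g\<in>carrier G. mat_tr (\<rho> g))"
  using assms unfolding Irr_def by blast

lemma irr_crep_crep: "irr_crep G n \<rho> \<Longrightarrow> crep G n \<rho>"
  unfolding irr_crep_def by blast

lemma IrrI: "irr_crep G n \<rho> \<Longrightarrow> (\<lambda>g\<in>carrier G. mat_tr (\<rho> g)) \<in> Irr G"
  unfolding Irr_def by blast

lemma quot_set_mono:
  assumes "{a \<in> carrier G. P (N #>\<^bsub>G\<^esub> a)} \<subseteq> {a \<in> carrier G. Q (N #>\<^bsub>G\<^esub> a)}"
  shows "{C \<in> carrier (G Mod N). P C} \<subseteq> {C \<in> carrier (G Mod N). Q C}"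
proof
  fix C assume C: "C \<in> {C \<in> carrier (G Mod N). P C}"
  hence C0: "C \<in> carrier (G Mod N)" and PC: "P C" by auto
  obtain a where a: "a \<in> carrier G" and Ca: "C = N #>\<^bsub>G\<^esub> a"
    using C0 quot_carrier_iff[of C G N] by blast
  have "a \<in> {a \<in> carrier G. P (N #>\<^bsub>G\<^esub> a)}" using a PC Ca by simp
  hence "a \<in> {a \<in> carrier G. Q (N #>\<^bsub>G\<^esub> a)}" using assms by blast
  thus "C \<in> {C \<in> carrier (G Mod N). Q C}" using C0 Ca by simp
qed

lemma nested_quot:
  assumes grp: "group G" and nN: "N \<lhd> G" and nest: "nested G"
  shows "nested (G Mod N)"
  unfolding nested_def
proof (intro ballI)
  fix \<chi> \<psi> assume \<chi>: "\<chi> \<in> Irr (G Mod N)" and \<psi>: "\<psi> \<in> Irr (G Mod N)"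
  have grpH: "group (G Mod N)" by (rule quot_group[OF nN])
  obtain n1 \<sigma>1 where i1: "irr_crep (G Mod N) n1 \<sigma>1" and \<chi>d: "\<chi> = (\<lambda>g\<in>carrier (G Mod N). mat_tr (\<sigma>1 g))"
    using \<chi> by (rule IrrE)
  obtain n2 \<sigma>2 where i2: "irr_crep (G Mod N) n2 \<sigma>2" and \<psi>d: "\<psi> = (\<lambda>g\<in>carrier (G Mod N). mat_tr (\<sigma>2 g))"
    using \<psi> by (rule IrrE)
  have j1: "irr_crep G n1 (\<lambda>a. \<sigma>1 (N #>\<^bsub>G\<^esub> a))" by (rule inflate[OF nN i1])
  have j2: "irr_crep G n2 (\<lambda>a. \<sigma>2 (N #>\<^bsub>G\<^esub> a))" by (rule inflate[OF nN i2])
  have Z1: "char_center (G Mod N) \<chi> = {C \<in> carrier (G Mod N). cmod (mat_tr (\<sigma>1 C)) = real n1}"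
    unfolding \<chi>d by (rule char_center_rep[OF grpH irr_crep_crep[OF i1]])
  have Z2: "char_center (G Mod N) \<psi> = {C \<in> carrier (G Mod N). cmod (mat_tr (\<sigma>2 C)) = real n2}"
    unfolding \<psi>d by (rule char_center_rep[OF grpH irr_crep_crep[OF i2]])
  have W1: "char_center G (\<lambda>g\<in>carrier G. mat_tr (\<sigma>1 (N #>\<^bsub>G\<^esub> g))) =
      {a \<in> carrier G. cmod (mat_tr (\<sigma>1 (N #>\<^bsub>G\<^esub> a))) = real n1}"
    by (rule char_center_rep[OF grp irr_crep_crep[OF j1]])
  have W2: "char_center G (\<lambda>g\<in>carrier G. mat_tr (\<sigma>2 (N #>\<^bsub>G\<^esub> g))) =
      {a \<in> carrier G. cmod (mat_tr (\<sigma>2 (N #>\<^bsub>G\<^esub> a))) = real n2}"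
    by (rule char_center_rep[OF grp irr_crep_crep[OF j2]])
  have "char_center G (\<lambda>g\<in>carrier G. mat_tr (\<sigma>1 (N #>\<^bsub>G\<^esub> g))) \<subseteq>
        char_center G (\<lambda>g\<in>carrier G. mat_tr (\<sigma>2 (N #>\<^bsub>G\<^esub> g))) \<or>
        char_center G (\<lambda>g\<in>carrier G. mat_tr (\<sigma>2 (N #>\<^bsub>G\<^esub> g))) \<subseteq>
        char_center G (\<lambda>g\<in>carrier G. mat_tr (\<sigma>1 (N #>\<^bsub>G\<^esub> g)))"
    using nest IrrI[OF j1] IrrI[OF j2] unfolding nested_def by blast
  thus "char_center (G Mod N) \<chi> \<subseteq> char_center (G Mod N) \<psi> \<or>
        char_center (G Mod N) \<psi> \<subseteq> char_center (G Mod N) \<chi>"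
  proof
    assume "char_center G (\<lambda>g\<in>carrier G. mat_tr (\<sigma>1 (N #>\<^bsub>G\<^esub> g))) \<subseteq>
        char_center G (\<lambda>g\<in>carrier G. mat_tr (\<sigma>2 (N #>\<^bsub>G\<^esub> g)))"
    hence "char_center (G Mod N) \<chi> \<subseteq> char_center (G Mod N) \<psi>"
      unfolding Z1 Z2 W1 W2 by (rule quot_set_mono)
    thus ?thesis ..
  next
    assume "char_center G (\<lambda>g\<in>carrier G. mat_tr (\<sigma>2 (N #>\<^bsub>G\<^esub> g))) \<subseteq>
        char_center G (\<lambda>g\<in>carrier G. mat_tr (\<sigma>1 (N #>\<^bsub>G\<^esub> g)))"
    hence "char_center (G Mod N) \<psi> \<subseteq> char_center (G Mod N) \<chi>"
      unfolding Z1 Z2 W1 W2 by (rule quot_set_mono)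
    thus ?thesis ..
  qed
qed

lemma scalar_comm:
  fixes B :: "complex mat"
  assumes B: "B \<in> carrier_mat n n"
  shows "(k \<cdot>\<^sub>m 1\<^sub>m n) * B = B * (k \<cdot>\<^sub>m 1\<^sub>m n)"
proof -
  have "(k \<cdot>\<^sub>m 1\<^sub>m n) * B = k \<cdot>\<^sub>m (1\<^sub>m n * B)" by (rule mult_smult_assoc_mat[OF _ B]) auto
  also have "1\<^sub>m n * B = B" by (rule left_mult_one_mat[OF B])
  also have "k \<cdot>\<^sub>m B = k \<cdot>\<^sub>m (B * 1\<^sub>m n)" using right_mult_one_mat[OF B] by simp
  also have "\<dots> = B * (k \<cdot>\<^sub>m 1\<^sub>m n)" by (rule mult_smult_distrib[OF B, symmetric]) auto
  finally show ?thesis .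
qed

lemma center_sub_char_center:
  assumes grp: "group G" and fin: "finite (carrier G)" and \<chi>: "\<chi> \<in> Irr G"
  shows "group_center G \<subseteq> char_center G \<chi>"
proof -
  obtain n \<rho> where i: "irr_crep G n \<rho>" and \<chi>d: "\<chi> = (\<lambda>g\<in>carrier G. mat_tr (\<rho> g))"
    using \<chi> by (rule IrrE)
  show ?thesis unfolding \<chi>d char_center_rep[OF grp irr_crep_crep[OF i]]
  proof
    fix z assume z: "z \<in> group_center G"
    hence "z \<in> carrier G" unfolding group_center_def by auto
    thus "z \<in> {g \<in> carrier G. cmod (mat_tr (\<rho> g)) = real n}"
      using center_in_char_center[OF grp fin i z] by simp
  qed
qed

lemma K_nontrivial:
  assumes grp: "group H" and fin: "finite (carrier H)" and nest: "nested H"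
    and ne: "carrier H \<noteq> {\<one>\<^bsub>H\<^esub>}"
  shows "Kgrp H \<noteq> {\<one>\<^bsub>H\<^esub>}"
proof (cases "\<forall>x\<in>carrier H. \<forall>y\<in>carrier H. x \<otimes>\<^bsub>H\<^esub> y = y \<otimes>\<^bsub>H\<^esub> x")
  case True
  then show ?thesis using ne unfolding Kgrp_def by simp
next
  case False
  let ?X = "{\<chi>. \<chi> \<in> Irr H \<and> group_center H \<subset> char_center H \<chi>}"
  have K: "Kgrp H = carrier H \<inter> \<Inter>{char_ker H \<chi> | \<chi>. \<chi> \<in> Irr H \<and> group_center H \<subset> char_center H \<chi>}"
    unfolding Kgrp_def by (rule if_not_P[OF False])
  show ?thesis
  proof (cases "?X = {}")
    case True
    hence E: "{char_ker H \<chi> | \<chi>. \<chi> \<in> Irr H \<and> group_center H \<subset> char_center H \<chi>} = {}" by auto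
    have "Kgrp H = carrier H" using K unfolding E by simp
    thus ?thesis using ne by simp
  next
    case False
    then obtain \<chi>1 where "\<chi>1 \<in> ?X" by blast
    then obtain \<psi>0 where p0: "\<psi>0 \<in> ?X" and min: "\<And>\<psi>. \<psi> \<in> ?X \<Longrightarrow> card (char_center H \<psi>0) \<le> card (char_center H \<psi>)"
      using ex_has_least_nat[of "\<lambda>\<psi>. \<psi> \<in> ?X" \<chi>1 "\<lambda>\<psi>. card (char_center H \<psi>)"] by blast
    from p0 have "group_center H \<subset> char_center H \<psi>0" by simp
    then obtain g where gZ: "g \<in> char_center H \<psi>0" and gnc: "g \<notin> group_center H" by blast
    have g: "g \<in> carrier H" using gZ unfolding char_center_def by simp
    then obtain h where h: "h \<in> carrier H" and gh: "g \<otimes>\<^bsub>H\<^esub> h \<noteq> h \<otimes>\<^bsub>H\<^esub> g"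
      using gnc unfolding group_center_def by blast
    have ghc: "g \<otimes>\<^bsub>H\<^esub> h \<in> carrier H" and hgc: "h \<otimes>\<^bsub>H\<^esub> g \<in> carrier H"
      using grp g h by (simp_all add: group.is_monoid monoid.m_closed)
    have ihg: "inv\<^bsub>H\<^esub> (h \<otimes>\<^bsub>H\<^esub> g) \<in> carrier H" using group.inv_closed[OF grp hgc] .
    define c where "c = (g \<otimes>\<^bsub>H\<^esub> h) \<otimes>\<^bsub>H\<^esub> inv\<^bsub>H\<^esub> (h \<otimes>\<^bsub>H\<^esub> g)"
    have cc: "c \<in> carrier H" unfolding c_def using grp ghc ihg by (simp add: group.is_monoid monoid.m_closed)
    have c1: "c \<noteq> \<one>\<^bsub>H\<^esub>"
    proof
      assume "c = \<one>\<^bsub>H\<^esub>"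
      hence "c \<otimes>\<^bsub>H\<^esub> (h \<otimes>\<^bsub>H\<^esub> g) = h \<otimes>\<^bsub>H\<^esub> g" using grp hgc by (simp add: group.is_monoid monoid.l_one)
      moreover have "c \<otimes>\<^bsub>H\<^esub> (h \<otimes>\<^bsub>H\<^esub> g) = g \<otimes>\<^bsub>H\<^esub> h"
        unfolding c_def using grp ghc hgc ihg
        by (simp add: group.is_monoid monoid.m_assoc group.l_inv monoid.r_one)
      ultimately show False using gh by simp
    qed
    have cK: "c \<in> char_ker H \<psi>" if \<psi>X: "\<psi> \<in> ?X" for \<psi>
    proof -
      from \<psi>X have \<psi>: "\<psi> \<in> Irr H" by simp
      obtain n \<rho> where i: "irr_crep H n \<rho>" and \<psi>d: "\<psi> = (\<lambda>g\<in>carrier H. mat_tr (\<rho> g))"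
        using \<psi> by (rule IrrE)
      have cr: "crep H n \<rho>" by (rule irr_crep_crep[OF i])
      have finZ: "finite (char_center H \<psi>)" using fin unfolding char_center_def by simp
      have sub: "char_center H \<psi>0 \<subseteq> char_center H \<psi>"
      proof -
        have p0': "\<psi>0 \<in> Irr H" using p0 by simp
        have NN: "\<forall>\<chi>\<in>Irr H. \<forall>\<psi>\<in>Irr H. char_center H \<chi> \<subseteq> char_center H \<psi> \<or> char_center H \<psi> \<subseteq> char_center H \<chi>"
          using nest unfolding nested_def .
        have cases: "char_center H \<psi>0 \<subseteq> char_center H \<psi> \<or> char_center H \<psi> \<subseteq> char_center H \<psi>0"
          using NN p0' \<psi> by blast
        have le: "card (char_center H \<psi>0) \<le> card (char_center H \<psi>)" using min[OF \<psi>X] .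
        have f0: "finite (char_center H \<psi>0)" using fin unfolding char_center_def by simp
        show ?thesis
        proof (cases "char_center H \<psi>0 \<subseteq> char_center H \<psi>")
          case True then show ?thesis .
        next
          case False
          hence s2: "char_center H \<psi> \<subseteq> char_center H \<psi>0" using cases by simp
          have "card (char_center H \<psi>) \<le> card (char_center H \<psi>0)" by (rule card_mono[OF f0 s2])
          hence "card (char_center H \<psi>) = card (char_center H \<psi>0)" using le by simp
          hence "char_center H \<psi> = char_center H \<psi>0" by (rule card_subset_eq[OF f0 s2])
          thus ?thesis by simp
        qed
      qed
      have "g \<in> char_center H \<psi>" using sub gZ by blast
      hence "cmod (mat_tr (\<rho> g)) = real n"
        unfolding \<psi>d char_center_rep[OF grp cr] by simp
      from crep_abs_tr_scalar[OF grp fin cr g this] obtain k where k: "\<rho> g = k \<cdot>\<^sub>m 1\<^sub>m n" by blast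
      have "\<rho> (g \<otimes>\<^bsub>H\<^esub> h) = \<rho> g * \<rho> h" by (rule crep_mult[OF cr g h])
      also have "\<dots> = \<rho> h * \<rho> g" unfolding k by (rule scalar_comm[OF crep_carrier[OF cr h]])
      also have "\<dots> = \<rho> (h \<otimes>\<^bsub>H\<^esub> g)" by (rule crep_mult[OF cr h g, symmetric])
      finally have e: "\<rho> (g \<otimes>\<^bsub>H\<^esub> h) = \<rho> (h \<otimes>\<^bsub>H\<^esub> g)" .
      have "\<rho> c = \<rho> (g \<otimes>\<^bsub>H\<^esub> h) * \<rho> (inv\<^bsub>H\<^esub> (h \<otimes>\<^bsub>H\<^esub> g))"
        unfolding c_def by (rule crep_mult[OF cr ghc ihg])
      also have "\<dots> = 1\<^sub>m n" unfolding e by (rule crep_inv(1)[OF grp cr hgc])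
      finally have "\<rho> c = 1\<^sub>m n" .
      hence "mat_tr (\<rho> c) = of_nat n" by (simp add: mat_tr_one)
      thus ?thesis unfolding \<psi>d char_ker_rep[OF grp cr] using cc by simp
    qed
    have "c \<in> Kgrp H" unfolding K using cc cK by blast
    thus ?thesis using c1 by blast
  qed
qed

lemma quot_nontrivial:
  assumes nN: "N \<lhd> G" and NG: "N \<noteq> carrier G"
  shows "carrier (G Mod N) \<noteq> {\<one>\<^bsub>G Mod N\<^esub>}"
proof
  assume eq: "carrier (G Mod N) = {\<one>\<^bsub>G Mod N\<^esub>}"
  have grp: "group G" using nN by (simp add: normal_def)
  have sg: "subgroup N G" using nN by (simp add: normal_def)
  have sub: "N \<subseteq> carrier G" using sg by (simp add: subgroup_def)
  obtain a where a: "a \<in> carrier G" and aN: "a \<notin> N" using sub NG by blast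
  have "N #>\<^bsub>G\<^esub> a \<in> carrier (G Mod N)" using a quot_carrier_iff[of _ G N] by blast
  hence "N #>\<^bsub>G\<^esub> a = N" using eq by simp
  moreover have "a \<in> N #>\<^bsub>G\<^esub> a" using group.rcos_self[OF grp a sg] .
  ultimately show False using aN by simp
qed

theorem theoremD:
  fixes G :: "('a, 'b) monoid_scheme"
  assumes "group G" and "finite (carrier G)"
  shows "nested G \<longleftrightarrow>
    (\<forall>N. N \<lhd> G \<and> N \<noteq> carrier G \<longrightarrow> Kgrp (G Mod N) \<noteq> {\<one>\<^bsub>G Mod N\<^esub>})"
proof
  assume nest: "nested G"
  show "\<forall>N. N \<lhd> G \<and> N \<noteq> carrier G \<longrightarrow> Kgrp (G Mod N) \<noteq> {\<one>\<^bsub>G Mod N\<^esub>}"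
  proof (intro allI impI, elim conjE)
    fix N assume nN: "N \<lhd> G" and NG: "N \<noteq> carrier G"
    show "Kgrp (G Mod N) \<noteq> {\<one>\<^bsub>G Mod N\<^esub>}"
      by (rule K_nontrivial[OF quot_group[OF nN] quot_finite[OF assms(2)]
            nested_quot[OF assms(1) nN nest] quot_nontrivial[OF nN NG]])
  qed
next
  assume R: "\<forall>N. N \<lhd> G \<and> N \<noteq> carrier G \<longrightarrow> Kgrp (G Mod N) \<noteq> {\<one>\<^bsub>G Mod N\<^esub>}"
  have grp: "group G" and fin: "finite (carrier G)" using assms .
  show "nested G"
    unfolding nested_def
  proof (intro ballI)
    fix \<chi> \<psi> assume \<chi>: "\<chi> \<in> Irr G" and \<psi>: "\<psi> \<in> Irr G"
    obtain n1 \<rho>1 where i1: "irr_crep G n1 \<rho>1" and \<chi>d: "\<chi> = (\<lambda>g\<in>carrier G. mat_tr (\<rho>1 g))"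
      using \<chi> by (rule IrrE)
    obtain n2 \<rho>2 where i2: "irr_crep G n2 \<rho>2" and \<psi>d: "\<psi> = (\<lambda>g\<in>carrier G. mat_tr (\<rho>2 g))"
      using \<psi> by (rule IrrE)
    have c1: "crep G n1 \<rho>1" by (rule irr_crep_crep[OF i1])
    have c2: "crep G n2 \<rho>2" by (rule irr_crep_crep[OF i2])
    have Z1: "char_center G \<chi> = {g \<in> carrier G. cmod (mat_tr (\<rho>1 g)) = real n1}"
      unfolding \<chi>d by (rule char_center_rep[OF grp c1])
    have Z2: "char_center G \<psi> = {g \<in> carrier G. cmod (mat_tr (\<rho>2 g)) = real n2}"
      unfolding \<psi>d by (rule char_center_rep[OF grp c2])
    show "char_center G \<chi> \<subseteq> char_center G \<psi> \<or> char_center G \<psi> \<subseteq> char_center G \<chi>"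
    proof (rule ccontr)
      assume nc: "\<not> (char_center G \<chi> \<subseteq> char_center G \<psi> \<or> char_center G \<psi> \<subseteq> char_center G \<chi>)"
      define N where "N = {a \<in> carrier G. \<rho>1 a = 1\<^sub>m n1 \<and> \<rho>2 a = 1\<^sub>m n2}"
      have nN: "N \<lhd> G" unfolding N_def by (rule two_ker_normal[OF grp c1 c2])
      have ker1: "\<forall>h\<in>N. \<rho>1 h = 1\<^sub>m n1" and ker2: "\<forall>h\<in>N. \<rho>2 h = 1\<^sub>m n2"
        unfolding N_def by auto
      have NG: "N \<noteq> carrier G"
      proof
        assume NG: "N = carrier G"
        have "char_center G \<chi> = carrier G"
        proof
          show "char_center G \<chi> \<subseteq> carrier G" unfolding Z1 by auto
          show "carrier G \<subseteq> char_center G \<chi>"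
          proof
            fix a assume a: "a \<in> carrier G"
            hence "\<rho>1 a = 1\<^sub>m n1" using ker1 NG by blast
            thus "a \<in> char_center G \<chi>" unfolding Z1 using a by (simp add: mat_tr_one)
          qed
        qed
        moreover have "char_center G \<psi> \<subseteq> carrier G" unfolding Z2 by auto
        ultimately show False using nc by simp
      qed
      have KH: "Kgrp (G Mod N) \<noteq> {\<one>\<^bsub>G Mod N\<^esub>}" using R nN NG by blast
      let ?H = "G Mod N"
      have grpH: "group ?H" by (rule quot_group[OF nN])
      have finH: "finite (carrier ?H)" by (rule quot_finite[OF fin])
      have sg: "subgroup N G" using nN by (simp add: normal_def)
      define \<sigma>1 where "\<sigma>1 = (\<lambda>C. \<rho>1 (SOME b. b \<in> C))"
      define \<sigma>2 where "\<sigma>2 = (\<lambda>C. \<rho>2 (SOME b. b \<in> C))"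
      have j1: "irr_crep ?H n1 \<sigma>1" unfolding \<sigma>1_def by (rule deflate[OF nN i1 ker1])
      have j2: "irr_crep ?H n2 \<sigma>2" unfolding \<sigma>2_def by (rule deflate[OF nN i2 ker2])
      have d1: "crep ?H n1 \<sigma>1" by (rule irr_crep_crep[OF j1])
      have d2: "crep ?H n2 \<sigma>2" by (rule irr_crep_crep[OF j2])
      have se1: "\<sigma>1 (N #>\<^bsub>G\<^esub> a) = \<rho>1 a" if "a \<in> carrier G" for a
        unfolding \<sigma>1_def by (rule coset_some_eq[OF nN c1 ker1 that])
      have se2: "\<sigma>2 (N #>\<^bsub>G\<^esub> a) = \<rho>2 a" if "a \<in> carrier G" for a
        unfolding \<sigma>2_def by (rule coset_some_eq[OF nN c2 ker2 that])
      define \<chi>' where "\<chi>' = (\<lambda>C\<in>carrier ?H. mat_tr (\<sigma>1 C))"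
      define \<psi>' where "\<psi>' = (\<lambda>C\<in>carrier ?H. mat_tr (\<sigma>2 C))"
      have \<chi>'I: "\<chi>' \<in> Irr ?H" unfolding \<chi>'_def by (rule IrrI[OF j1])
      have \<psi>'I: "\<psi>' \<in> Irr ?H" unfolding \<psi>'_def by (rule IrrI[OF j2])
      have Y1: "char_center ?H \<chi>' = {C \<in> carrier ?H. cmod (mat_tr (\<sigma>1 C)) = real n1}"
        unfolding \<chi>'_def by (rule char_center_rep[OF grpH d1])
      have Y2: "char_center ?H \<psi>' = {C \<in> carrier ?H. cmod (mat_tr (\<sigma>2 C)) = real n2}"
        unfolding \<psi>'_def by (rule char_center_rep[OF grpH d2])
      have gc1: "group_center ?H \<subseteq> char_center ?H \<chi>'"
        by (rule center_sub_char_center[OF grpH finH \<chi>'I])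
      have gc2: "group_center ?H \<subseteq> char_center ?H \<psi>'"
        by (rule center_sub_char_center[OF grpH finH \<psi>'I])
      have one_not: "\<not> (group_center ?H \<subset> char_center ?H \<chi>' \<and> group_center ?H \<subset> char_center ?H \<psi>')"
      proof
        assume both: "group_center ?H \<subset> char_center ?H \<chi>' \<and> group_center ?H \<subset> char_center ?H \<psi>'"
        show False
        proof (cases "\<forall>x\<in>carrier ?H. \<forall>y\<in>carrier ?H. x \<otimes>\<^bsub>?H\<^esub> y = y \<otimes>\<^bsub>?H\<^esub> x")
          case True
          hence "group_center ?H = carrier ?H" unfolding group_center_def by auto
          moreover have "char_center ?H \<chi>' \<subseteq> carrier ?H" unfolding char_center_def by auto
          ultimately show False using both by auto
        next
          case False
          have K: "Kgrp ?H = carrier ?H \<inter> \<Inter>{char_ker ?H \<chi> | \<chi>. \<chi> \<in> Irr ?H \<and> group_center ?H \<subset> char_center ?H \<chi>}"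
            unfolding Kgrp_def by (rule if_not_P[OF False])
          have K1: "Kgrp ?H \<subseteq> char_ker ?H \<chi>'" unfolding K using \<chi>'I both by blast
          have K2: "Kgrp ?H \<subseteq> char_ker ?H \<psi>'" unfolding K using \<psi>'I both by blast
          have L1: "char_ker ?H \<chi>' = {C \<in> carrier ?H. mat_tr (\<sigma>1 C) = of_nat n1}"
            unfolding \<chi>'_def by (rule char_ker_rep[OF grpH d1])
          have L2: "char_ker ?H \<psi>' = {C \<in> carrier ?H. mat_tr (\<sigma>2 C) = of_nat n2}"
            unfolding \<psi>'_def by (rule char_ker_rep[OF grpH d2])
          have sub1: "Kgrp ?H \<subseteq> {\<one>\<^bsub>?H\<^esub>}"
          proof
            fix C assume CK: "C \<in> Kgrp ?H"
            hence C0: "C \<in> carrier ?H" unfolding K by blast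
            obtain a where a: "a \<in> carrier G" and Ca: "C = N #>\<^bsub>G\<^esub> a"
              using C0 quot_carrier_iff[of C G N] by blast
            have "mat_tr (\<sigma>1 C) = of_nat n1" using K1 CK L1 by blast
            hence "mat_tr (\<rho>1 a) = of_nat n1" using se1[OF a] Ca by simp
            hence r1: "\<rho>1 a = 1\<^sub>m n1" by (rule crep_tr_one[OF grp fin c1 a])
            have "mat_tr (\<sigma>2 C) = of_nat n2" using K2 CK L2 by blast
            hence "mat_tr (\<rho>2 a) = of_nat n2" using se2[OF a] Ca by simp
            hence r2: "\<rho>2 a = 1\<^sub>m n2" by (rule crep_tr_one[OF grp fin c2 a])
            have aN: "a \<in> N" unfolding N_def using a r1 r2 by simp
            have "C = N" unfolding Ca by (rule subgroup.rcos_const[OF sg grp aN])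
            thus "C \<in> {\<one>\<^bsub>?H\<^esub>}" by simp
          qed
          have "\<one>\<^bsub>?H\<^esub> \<in> Kgrp ?H"
          proof -
            have o: "\<one>\<^bsub>?H\<^esub> \<in> carrier ?H" by (rule monoid.one_closed[OF group.is_monoid[OF grpH]])
            have "\<forall>\<phi>. \<one>\<^bsub>?H\<^esub> \<in> char_ker ?H \<phi>" using o unfolding char_ker_def by simp
            thus ?thesis unfolding K using o by blast
          qed
          with sub1 have "Kgrp ?H = {\<one>\<^bsub>?H\<^esub>}" by blast
          with KH show False by simp
        qed
      qed
      have T: "char_center G \<chi> \<subseteq> char_center G \<psi>"
        if Y: "char_center ?H \<chi>' \<subseteq> char_center ?H \<psi>'"
      proof
        fix a assume aZ: "a \<in> char_center G \<chi>"
        hence a: "a \<in> carrier G" and ca: "cmod (mat_tr (\<rho>1 a)) = real n1" unfolding Z1 by auto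
        have aC: "N #>\<^bsub>G\<^esub> a \<in> carrier ?H" using a quot_carrier_iff[of _ G N] by blast
        have "N #>\<^bsub>G\<^esub> a \<in> char_center ?H \<chi>'" unfolding Y1 using aC ca se1[OF a] by simp
        hence "N #>\<^bsub>G\<^esub> a \<in> char_center ?H \<psi>'" using Y by blast
        hence "cmod (mat_tr (\<rho>2 a)) = real n2" unfolding Y2 using se2[OF a] by simp
        thus "a \<in> char_center G \<psi>" unfolding Z2 using a by simp
      qed
      have T2: "char_center G \<psi> \<subseteq> char_center G \<chi>"
        if Y: "char_center ?H \<psi>' \<subseteq> char_center ?H \<chi>'"
      proof
        fix a assume aZ: "a \<in> char_center G \<psi>"
        hence a: "a \<in> carrier G" and ca: "cmod (mat_tr (\<rho>2 a)) = real n2" unfolding Z2 by auto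
        have aC: "N #>\<^bsub>G\<^esub> a \<in> carrier ?H" using a quot_carrier_iff[of _ G N] by blast
        have "N #>\<^bsub>G\<^esub> a \<in> char_center ?H \<psi>'" unfolding Y2 using aC ca se2[OF a] by simp
        hence "N #>\<^bsub>G\<^esub> a \<in> char_center ?H \<chi>'" using Y by blast
        hence "cmod (mat_tr (\<rho>1 a)) = real n1" unfolding Y1 using se1[OF a] by simp
        thus "a \<in> char_center G \<chi>" unfolding Z1 using a by simp
      qed
      show False
      proof (cases "group_center ?H \<subset> char_center ?H \<chi>'")
        case True
        hence "\<not> group_center ?H \<subset> char_center ?H \<psi>'" using one_not by blast
        hence "char_center ?H \<psi>' = group_center ?H" using gc2 by blast
        hence "char_center ?H \<psi>' \<subseteq> char_center ?H \<chi>'" using gc1 by simp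
        thus False using T2 nc by blast
      next
        case False
        hence "char_center ?H \<chi>' = group_center ?H" using gc1 by blast
        hence "char_center ?H \<chi>' \<subseteq> char_center ?H \<psi>'" using gc2 by simp
        thus False using T nc by blast
      qed
    qed
  qed
qed

end
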